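(* Fix a prompt $\mathbf{x}$, a finite set $\mathcal{Y}$ of responses, a reference policy $\pi_{\mathrm{ref}}(\cdot\mid\mathbf{x})$ with $\pi_{\mathrm{ref}}(\mathbf{y}\mid\mathbf{x})>0$ for all $\mathbf{y}\in\mathcal{Y}$, a reward function $r(\mathbf{x},\mathbf{y})\in\mathbb{R}$, a coefficient $\beta>0$, and a differentiably parameterized family of policies $\pi_\theta(\cdot\mid\mathbf{x})$ with $\pi_\theta(\mathbf{y}\mid\mathbf{x})>0$ for all $\mathbf{y}$. Define $$w(\mathbf{x},\mathbf{y})=\frac{\exp(r(\mathbf{x},\mathbf{y})/\beta)}{\sum_{\mathbf{y}'}\pi_{\mathrm{ref}}(\mathbf{y}'\mid\mathbf{x})\exp(r(\mathbf{x},\mathbf{y}')/\beta)},\qquad \hat w(\mathbf{x},\mathbf{y})=\frac{\pi_\theta(\mathbf{y}\mid\mathbf{x})/\pi_{\mathrm{ref}}(\mathbf{y}\mid\mathbf{x})}{\sum_{\mathbf{y}'}\pi_{\mathrm{ref}}(\mathbf{y}'\mid\mathbf{x})\,\big(\pi_\theta(\mathbf{y}'\mid\mathbf{x})/\pi_{\mathrm{ref}}(\mathbf{y}'\mid\mathbf{x})\big)},$$ and let $$\mathcal{L}_1(\theta)=-\mathbb{E}_{\mathbf{y}\sim\pi_{\mathrm{ref}}(\cdot\mid\mathbf{x})}\big[w(\mathbf{x},\mathbf{y})\log \hat w(\mathbf{x},\mathbf{y})\big]$$ (the first term of the Cal-DPO population loss) and $$\mathcal{L}_{\mathrm{MLE}}(\theta)=-\mathbb{E}_{\mathbf{y}\sim\pi_{\mathrm{ref}}(\cdot\mid\mathbf{x})}\big[w(\mathbf{x},\mathbf{y})\log\pi_\theta(\mathbf{y}\mid\mathbf{x})\big].$$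 Then minimizing $\mathcal{L}_1$ over $\theta$ is equivalent to minimizing $\mathcal{L}_{\mathrm{MLE}}$, i.e. to minimizing the forward KL divergence $\mathbb{D}_{\mathrm{KL}}[\pi^*(\cdot\mid\mathbf{x})\,\|\,\pi_\theta(\cdot\mid\mathbf{x})]$ (the two objectives differ by a quantity not depending on $\theta$), and the negative gradient of $\mathcal{L}_1$ has the contrastive form $$-\nabla_\theta\mathcal{L}_1(\theta)=\mathbb{E}_{\mathbf{y}\sim\pi_{\mathrm{ref}}(\cdot\mid\mathbf{x})}\Big[\big(w(\mathbf{x},\mathbf{y})-\hat w(\mathbf{x},\mathbf{y})\big)\nabla_\theta\log\pi_\theta(\mathbf{y}\mid\mathbf{x})\Big].$$
   Context: Here $\pi^*(\mathbf{y}\mid\mathbf{x})=\pi_{\mathrm{ref}}(\mathbf{y}\mid\mathbf{x})\exp(r(\mathbf{x},\mathbf{y})/\beta)/Z(\mathbf{x})$ with $Z(\mathbf{x})=\sum_{\mathbf{y}}\pi_{\mathrm{ref}}(\mathbf{y}\mid\mathbf{x})\exp(r(\mathbf{x},\mathbf{y})/\beta)$ is the optimal KL-regularized policy, so that $w(\mathbf{x},\mathbf{y})=\pi^*(\mathbf{y}\mid\mathbf{x})/\pi_{\mathrm{ref}}(\mathbf{y}\mid\mathbf{x})$. Expectations over $\pi_{\mathrm{ref}}$ are finite sums $\sum_{\mathbf{y}\in\mathcal{Y}}\pi_{\mathrm{ref}}(\mathbf{y}\mid\mathbf{x})(\cdot)$. *)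

theory Defs
  imports "HOL-Analysis.Analysis"
begin

text \<open>Fixed prompt x is suppressed: all quantities are functions of the response y only.
  pref = reference policy, r = reward, p theta = policy pi_theta, Y = finite response set.\<close>

definition Zr :: "'b set \<Rightarrow> ('b \<Rightarrow> real) \<Rightarrow> ('b \<Rightarrow> real) \<Rightarrow> real \<Rightarrow> real" where
  "Zr Y pref r \<beta> = (\<Sum>y'\<in>Y. pref y' * exp (r y' / \<beta>))"

definition wt :: "'b set \<Rightarrow> ('b \<Rightarrow> real) \<Rightarrow> ('b \<Rightarrow> real) \<Rightarrow> real \<Rightarrow> 'b \<Rightarrow> real" where
  "wt Y pref r \<beta> y = exp (r y / \<beta>) / Zr Y pref r \<beta>"

definition what :: "'b set \<Rightarrow> ('b \<Rightarrow> real) \<Rightarrow> ('a \<Rightarrow> 'b \<Rightarrow> real) \<Rightarrow> 'a \<Rightarrow> 'b \<Rightarrow> real" where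
  "what Y pref p \<theta> y =
     (p \<theta> y / pref y) / (\<Sum>y'\<in>Y. pref y' * (p \<theta> y' / pref y'))"

definition pistar :: "'b set \<Rightarrow> ('b \<Rightarrow> real) \<Rightarrow> ('b \<Rightarrow> real) \<Rightarrow> real \<Rightarrow> 'b \<Rightarrow> real" where
  "pistar Y pref r \<beta> y = pref y * exp (r y / \<beta>) / Zr Y pref r \<beta>"

definition L1 :: "'b set \<Rightarrow> ('b \<Rightarrow> real) \<Rightarrow> ('b \<Rightarrow> real) \<Rightarrow> real \<Rightarrow> ('a \<Rightarrow> 'b \<Rightarrow> real) \<Rightarrow> 'a \<Rightarrow> real" where
  "L1 Y pref r \<beta> p \<theta> = - (\<Sum>y\<in>Y. pref y * (wt Y pref r \<beta> y * ln (what Y pref p \<theta> y)))"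

definition LMLE :: "'b set \<Rightarrow> ('b \<Rightarrow> real) \<Rightarrow> ('b \<Rightarrow> real) \<Rightarrow> real \<Rightarrow> ('a \<Rightarrow> 'b \<Rightarrow> real) \<Rightarrow> 'a \<Rightarrow> real" where
  "LMLE Y pref r \<beta> p \<theta> = - (\<Sum>y\<in>Y. pref y * (wt Y pref r \<beta> y * ln (p \<theta> y)))"

definition KL :: "'b set \<Rightarrow> ('b \<Rightarrow> real) \<Rightarrow> ('b \<Rightarrow> real) \<Rightarrow> real" where
  "KL Y P Q = (\<Sum>y\<in>Y. P y * ln (P y / Q y))"

end

theory Submission
  imports Defs
begin

lemma gderiv_sum:
  assumes "\<And>i. i \<in> I \<Longrightarrow> GDERIV (f i) x :> D i"
  shows "GDERIV (\<lambda>x. \<Sum>i\<in>I. f i x) x :> (\<Sum>i\<in>I. D i)"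
  using assms unfolding gderiv_def inner_sum_right by (rule has_derivative_sum)

lemma gderiv_unique:
  assumes "GDERIV f x :> D" "GDERIV f x :> E"
  shows "D = E"
proof -
  have "(\<lambda>h. inner h D) = (\<lambda>h. inner h E)"
    using assms unfolding gderiv_def by (rule has_derivative_unique)
  then have "inner (D - E) D = inner (D - E) E" by metis
  then have "inner (D - E) (D - E) = 0" by (simp add: inner_diff_right)
  then show ?thesis by simp
qed

lemma gderiv_cmult:
  assumes "GDERIV f x :> D"
  shows "GDERIV (\<lambda>x. c * f x) x :> c *\<^sub>R D"
  using GDERIV_mult[OF GDERIV_const assms, of c] by simp

theorem theorem1:
  fixes Y :: "'b set" and pref r :: "'b \<Rightarrow> real" and \<beta> :: real
    and p :: "'a::real_inner \<Rightarrow> 'b \<Rightarrow> real" and g :: "'a \<Rightarrow> 'b \<Rightarrow> 'a"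
  assumes finY: "finite Y" and neY: "Y \<noteq> {}"
    and pref_pos: "\<forall>y\<in>Y. pref y > 0" and pref_sum: "(\<Sum>y\<in>Y. pref y) = 1"
    and beta_pos: "\<beta> > 0"
    and p_pos: "\<forall>\<theta>. \<forall>y\<in>Y. p \<theta> y > 0" and p_sum: "\<forall>\<theta>. (\<Sum>y\<in>Y. p \<theta> y) = 1"
    and p_diff: "\<forall>\<theta>. \<forall>y\<in>Y. GDERIV (\<lambda>t. p t y) \<theta> :> g \<theta> y"
  shows "(\<exists>c. \<forall>\<theta>. L1 Y pref r \<beta> p \<theta> = LMLE Y pref r \<beta> p \<theta> + c)
       \<and> (\<exists>c. \<forall>\<theta>. KL Y (pistar Y pref r \<beta>) (p \<theta>) = LMLE Y pref r \<beta> p \<theta> + c)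
       \<and> (\<forall>\<theta>. GDERIV (\<lambda>t. - L1 Y pref r \<beta> p t) \<theta> :>
             (\<Sum>y\<in>Y. (pref y * (wt Y pref r \<beta> y - what Y pref p \<theta> y))
                        *\<^sub>R ((1 / p \<theta> y) *\<^sub>R g \<theta> y)))"
proof -
  let ?w = "wt Y pref r \<beta>"
  have pp: "p t y > 0" if "y \<in> Y" for t y using p_pos that by blast
  have pr: "pref y > 0" if "y \<in> Y" for y using pref_pos that by blast
  have what_eq: "what Y pref p t y = p t y / pref y" if "y \<in> Y" for t y
  proof -
    have "(\<Sum>y'\<in>Y. pref y' * (p t y' / pref y')) = (\<Sum>y'\<in>Y. p t y')"
      using pref_pos by (intro sum.cong) auto
    then show ?thesis using p_sum unfolding what_def by simp
  qed
  define C where "C = (\<Sum>y\<in>Y. pref y * (?w y * ln (pref y)))"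
  have L1_eq: "L1 Y pref r \<beta> p t = LMLE Y pref r \<beta> p t + C" for t
  proof -
    have "L1 Y pref r \<beta> p t = - (\<Sum>y\<in>Y. pref y * (?w y * ln (p t y)) - pref y * (?w y * ln (pref y)))"
      unfolding L1_def
    proof (intro arg_cong[where f=uminus] sum.cong refl)
      fix y assume y: "y \<in> Y"
      have "ln (what Y pref p t y) = ln (p t y) - ln (pref y)"
        using ln_divide_pos[OF pp[of y t, OF y] pr[OF y]] by (simp add: what_eq[OF y])
      then show "pref y * (?w y * ln (what Y pref p t y)) = pref y * (?w y * ln (p t y)) - pref y * (?w y * ln (pref y))"
        by (simp only: right_diff_distrib)
    qed
    then show ?thesis unfolding LMLE_def C_def by (simp add: sum_subtractf)
  qed
  have Zpos: "Zr Y pref r \<beta> > 0"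
    unfolding Zr_def using pref_pos finY neY by (intro sum_pos) auto
  have ps_eq: "pistar Y pref r \<beta> y = pref y * ?w y" for y
    unfolding pistar_def wt_def by simp
  have ps_pos: "pistar Y pref r \<beta> y > 0" if "y \<in> Y" for y
    unfolding pistar_def using Zpos pref_pos that by simp
  define D where "D = (\<Sum>y\<in>Y. pistar Y pref r \<beta> y * ln (pistar Y pref r \<beta> y))"
  have KL_eq: "KL Y (pistar Y pref r \<beta>) (p t) = LMLE Y pref r \<beta> p t + D" for t
  proof -
    have "KL Y (pistar Y pref r \<beta>) (p t) = (\<Sum>y\<in>Y. pistar Y pref r \<beta> y * ln (pistar Y pref r \<beta> y) - pref y * (?w y * ln (p t y)))"
      unfolding KL_def using ps_pos p_pos
      by (intro sum.cong) (auto simp: ln_divide_pos algebra_simps ps_eq)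
    then show ?thesis unfolding LMLE_def D_def by (simp add: sum_subtractf)
  qed
  have grad: "GDERIV (\<lambda>t. - L1 Y pref r \<beta> p t) \<theta> :>
             (\<Sum>y\<in>Y. (pref y * (?w y - what Y pref p \<theta> y)) *\<^sub>R ((1 / p \<theta> y) *\<^sub>R g \<theta> y))" for \<theta>
  proof -
    have gsum0: "(\<Sum>y\<in>Y. g \<theta> y) = 0"
    proof -
      have "GDERIV (\<lambda>t. \<Sum>y\<in>Y. p t y) \<theta> :> (\<Sum>y\<in>Y. g \<theta> y)"
        using p_diff by (intro gderiv_sum) auto
      moreover have "GDERIV (\<lambda>t. \<Sum>y\<in>Y. p t y) \<theta> :> 0"
        using p_sum GDERIV_const[of 1 \<theta>] by simp
      ultimately show ?thesis by (rule gderiv_unique)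
    qed
    have fun_eq: "(\<lambda>t. - L1 Y pref r \<beta> p t) = (\<lambda>t. (\<Sum>y\<in>Y. (pref y * ?w y) * ln (p t y)) - C)"
      unfolding L1_eq LMLE_def by (auto simp: algebra_simps)
    have d1: "GDERIV (\<lambda>t. ln (p t y)) \<theta> :> (1 / p \<theta> y) *\<^sub>R g \<theta> y" if "y \<in> Y" for y
    proof -
      have "DERIV ln (p \<theta> y) :> inverse (p \<theta> y)"
        using p_pos that by (intro DERIV_ln) auto
      from GDERIV_DERIV_compose[OF p_diff[rule_format, OF that] this]
      show ?thesis by (simp add: divide_inverse)
    qed
    have "GDERIV (\<lambda>t. (\<Sum>y\<in>Y. (pref y * ?w y) * ln (p t y)) - C) \<theta> :>
        (\<Sum>y\<in>Y. (pref y * ?w y) *\<^sub>R ((1 / p \<theta> y) *\<^sub>R g \<theta> y)) - 0"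
      by (intro GDERIV_diff GDERIV_const gderiv_sum gderiv_cmult d1)
    moreover have "(\<Sum>y\<in>Y. (pref y * ?w y) *\<^sub>R ((1 / p \<theta> y) *\<^sub>R g \<theta> y)) - 0
        = (\<Sum>y\<in>Y. (pref y * (?w y - what Y pref p \<theta> y)) *\<^sub>R ((1 / p \<theta> y) *\<^sub>R g \<theta> y))"
    proof -
      have "(\<Sum>y\<in>Y. (pref y * (?w y - what Y pref p \<theta> y)) *\<^sub>R ((1 / p \<theta> y) *\<^sub>R g \<theta> y))
          = (\<Sum>y\<in>Y. (pref y * ?w y) *\<^sub>R ((1 / p \<theta> y) *\<^sub>R g \<theta> y) - g \<theta> y)"
      proof (intro sum.cong refl)
        fix y assume y: "y \<in> Y"
        have a: "p \<theta> y \<noteq> 0" "pref y \<noteq> 0" using pp[of y \<theta>, OF y] pr[OF y] by auto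
        have "pref y * what Y pref p \<theta> y * (1 / p \<theta> y) = 1"
          using a by (simp add: what_eq[OF y])
        then have b: "(pref y * what Y pref p \<theta> y) *\<^sub>R ((1 / p \<theta> y) *\<^sub>R g \<theta> y) = g \<theta> y"
          by (simp only: scaleR_scaleR scaleR_one)
        show "(pref y * (?w y - what Y pref p \<theta> y)) *\<^sub>R ((1 / p \<theta> y) *\<^sub>R g \<theta> y)
          = (pref y * ?w y) *\<^sub>R ((1 / p \<theta> y) *\<^sub>R g \<theta> y) - g \<theta> y"
          by (simp only: right_diff_distrib scaleR_diff_left b)
      qed
      then show ?thesis using gsum0 by (simp add: sum_subtractf)
    qed
    ultimately show ?thesis using fun_eq by simp
  qed
  show ?thesis using L1_eq KL_eq grad by blast
qed

end
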